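(* Let $n\ge2$, let $\nabla$ be an affine connection on $M$ with Christoffel symbols $\Gamma^i{}_{jk}$ on a chart $(U,x^i)$, let $P$ be the projective structure determined by $\nabla$ and $\omega=(\omega^i,\omega^i{}_j,\omega_j)$ the normal projective connection of $P$. Then there is a unique section $\sigma\colon U\to P$ such that (1) $\sigma^*\omega^i=dx^i$, and (2) writing $\sigma^*\omega^i{}_j=\Pi^i{}_{jk}dx^k$, one has $\Pi^i{}_{ik}=\mu_k$. This section also satisfies (2') $\Pi^i{}_{ji}=-\mu_j$, and condition (2) may be replaced by (2') (yielding the same unique section). Moreover, writing $\sigma^*\omega_j=\Pi_{jk}dx^k$, $$\Pi^i{}_{jk}=\Gamma^i{}_{jk}+\delta^i{}_j\nu_k+\delta^i{}_k\nu_j=\Gamma^i{}_{jk}-\tfrac1{2(n+1)}\big(\delta^i{}_j(\Gamma^\alpha{}_{\alpha k}+\Gamma^\alpha{}_{k\alpha})+\delta^i{}_k(\Gamma^\alpha{}_{\alpha j}+\Gamma^\alpha{}_{j\alpha})\big),$$ $$\Pi_{jk}=\frac{-1}{n^2-1}\Big(n\Big(\frac{\partial\Pi^i{}_{jk}}{\partial x^i}+\frac{\partial\mu_j}{\partial x^k}-\mu_\alpha\Pi^\alpha{}_{jk}-\Pi^\alpha{}_{j\beta}\Pi^\beta{}_{\alpha k}\Big)+\Big(\frac{\partial\Pi^i{}_{kj}}{\partial x^i}+\frac{\partial\mu_k}{\partial x^j}-\mu_\alpha\Pi^\alpha{}_{kj}-\Pi^\alpha{}_{k\beta}\Pi^\beta{}_{\alpha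 j}\Big)\Big).$$
   Context: Einstein summation. Christoffel symbols: $\Gamma^i{}_{jk}=dx^i(\nabla_{\partial/\partial x^k}\partial/\partial x^j)$. Reduced torsion $\mu_j=\frac12(\Gamma^\alpha{}_{\alpha j}-\Gamma^\alpha{}_{j\alpha})$ and $\nu_j=-\frac1{2(n+1)}(\Gamma^\alpha{}_{\alpha j}+\Gamma^\alpha{}_{j\alpha})$. Formal frames: $\widetilde G^2$ = pairs $(a^i{}_j,a^i{}_{jk})\in\mathrm{GL}_n\times\mathbb R^{n^3}$ with product $(a^i{}_j,a^i{}_{jk})(b^i{}_j,b^i{}_{jk})=(a^i{}_lb^l{}_j,a^i{}_lb^l{}_{jk}+a^i{}_{lm}b^l{}_jb^m{}_k)$; $\widetilde P^2(M)=P^2(M)\times_{G^2}\widetilde G^2$ with natural coordinates $(u^i,u^i{}_j,u^i{}_{jk})$ and canonical form $\theta^i=v^i{}_\alpha du^\alpha$, $\theta^i{}_j=v^i{}_\alpha du^\alpha{}_j-v^i{}_\alpha u^\alpha{}_{j\beta}v^\beta{}_\gamma du^\gamma$, $(v)=(u^i{}_j)^{-1}$. $H^2=\{(a^i{}_j,-(a^i{}_ja_k+a_ja^i{}_k))\}$. The projective structure determined by $\nabla$ is $P=\{(x,\delta^i{}_j,-\Gamma^i{}_{jk}).h: h\in H^2\}$. Cartan connections (on principal $H$-bundles, $H\cong H^2$ the isotropy group of $[0:\dots:0:1]$ in $\mathrm{PGL}_{n+1}(\mathbb R)$, $\mathfrak g=\mathfrak m\oplus\mathfrak{gl}_n\oplus\mathfrak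 m^*$), their curvature $\Omega^i{}_j=d\omega^i{}_j+\omega^i{}_k\wedge\omega^k{}_j+\omega^i\wedge\omega_j-\delta^i{}_j\omega_k\wedge\omega^k=\frac12K^i{}_{jkl}\omega^k\wedge\omega^l$. The normal projective connection of $P$ is the unique Cartan connection $\omega$ on $P$ whose components $(\omega^i,\omega^i{}_j)$ are the restriction of $(\theta^i,\theta^i{}_j)$ and with $K^i{}_{jil}=0$. *)

theory Defs
  imports "HOL-Analysis.Analysis"
begin

text \<open>The chart domain U is an open subset of real^'n,
  the dimension being n = CARD('n). Index conventions:
  Gamma i j k x = Christoffel symbol Gamma^i_{jk} at x;
  a frame point of tilde P^2(U) is (u, u1, u2) with u1 $ i $ j = u^i_j and
  u2 $ i $ j $ k = u^i_{jk};
  an element of g = m + gl_n + m^* is (u^i, A^i_j, eta_j).\<close>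

type_synonym 'n frame = "(real^'n) \<times> (real^'n^'n) \<times> (real^'n^'n^'n)"
type_synonym 'n galg = "(real^'n) \<times> (real^'n^'n) \<times> (real^'n)"

definition kd :: "'n \<Rightarrow> 'n \<Rightarrow> real" where
  "kd i j = (if i = j then 1 else 0)"

text \<open>Directional (partial) derivative; for b = axis i 1 this is d/dx^i.\<close>
definition pder :: "'a::real_vector \<Rightarrow> ('a \<Rightarrow> 'b::real_normed_vector) \<Rightarrow> 'a \<Rightarrow> 'b" where
  "pder b f x = vector_derivative (\<lambda>t. f (x + t *\<^sub>R b)) (at 0)"

primrec cdiff :: "nat \<Rightarrow> ('a::euclidean_space \<Rightarrow> 'b::real_normed_vector) \<Rightarrow> 'a set \<Rightarrow> bool" where
  "cdiff 0 f U = continuous_on U f"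
| "cdiff (Suc k) f U = ((\<forall>x\<in>U. f differentiable (at x)) \<and> (\<forall>b\<in>Basis. cdiff k (pder b f) U))"

definition cinf_on :: "('a::euclidean_space \<Rightarrow> 'b::real_normed_vector) \<Rightarrow> 'a set \<Rightarrow> bool" where
  "cinf_on f U = (\<forall>k. cdiff k f U)"

text \<open>Right action of tilde G^2 on tilde P^2 in natural coordinates (linear in the point,
  hence it is also its own differential on tangent vectors).\<close>
fun gact :: "'n frame \<Rightarrow> (real^'n^'n) \<times> (real^'n^'n^'n) \<Rightarrow> 'n frame" where
  "gact (x, u, u2) (b, b2) =
     (x, u ** b,
      \<chi> i j k. (\<Sum>l\<in>UNIV. u$i$l * b2$l$j$k) + (\<Sum>l\<in>UNIV. \<Sum>m\<in>UNIV. u2$i$l$m * b$l$j * b$m$k))"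

text \<open>The element of H^2 with parameters (a^i_j, a_k).  It corresponds to the class of
  the matrix [[a,0],[xi,1]] in PGL_{n+1} (the 2-jet at the origin of x |-> a x/(1+xi x)).\<close>
definition hjet :: "real^'n^'n \<Rightarrow> real^'n \<Rightarrow> (real^'n^'n) \<times> (real^'n^'n^'n)" where
  "hjet a \<xi> = (a, \<chi> i j k. - (a$i$j * \<xi>$k + \<xi>$j * a$i$k))"

definition proj_structure :: "('n::finite \<Rightarrow> 'n \<Rightarrow> 'n \<Rightarrow> real^'n \<Rightarrow> real) \<Rightarrow> (real^'n) set \<Rightarrow> 'n frame set" where
  "proj_structure \<Gamma> U =
     {gact (x, mat 1, \<chi> i j k. - \<Gamma> i j k x) (hjet a \<xi>) | x a \<xi>. x \<in> U \<and> invertible a}"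

definition tspace :: "'a::real_normed_vector set \<Rightarrow> 'a \<Rightarrow> 'a set" where
  "tspace S p = {v. \<exists>\<gamma>. (\<forall>t. \<gamma> t \<in> S) \<and> \<gamma> 0 = p \<and> (\<gamma> has_vector_derivative v) (at 0)}"

fun theta1 :: "'n frame \<Rightarrow> 'n frame \<Rightarrow> real^'n" where
  "theta1 (x, u, u2) (dx, du, du2) = matrix_inv u *v dx"

fun theta2 :: "'n frame \<Rightarrow> 'n frame \<Rightarrow> real^'n^'n" where
  "theta2 (x, u, u2) (dx, du, du2) =
     matrix_inv u ** du
     - (\<chi> i j. \<Sum>\<alpha>\<in>UNIV. \<Sum>\<beta>\<in>UNIV. (matrix_inv u)$i$\<alpha> * u2$\<alpha>$j$\<beta> * (matrix_inv u *v dx)$\<beta>)"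

text \<open>Exterior derivative of theta^i_j, with d alpha (v,w) = v(alpha(w)) - w(alpha(v)).\<close>
definition dtheta2 :: "'n frame \<Rightarrow> 'n frame \<Rightarrow> 'n frame \<Rightarrow> real^'n^'n" where
  "dtheta2 p v w = pder v (\<lambda>q. theta2 q w) p - pder w (\<lambda>q. theta2 q v) p"

text \<open>Adjoint action of h = [[a,0],[xi,1]] on g = pgl_{n+1}, where (u, A, eta) is the class
  of [[A,u],[eta,0]].\<close>
definition Ad :: "real^'n^'n \<Rightarrow> real^'n \<Rightarrow> 'n galg \<Rightarrow> 'n galg" where
  "Ad a \<xi> X = (case X of (u, A, \<eta>) \<Rightarrow>
     (let c = \<xi> \<bullet> u; ai = matrix_inv a in
      (a *v u,
       a ** A ** ai - (\<chi> i j. (a *v u)$i * (\<xi> v* ai)$j) - c *\<^sub>R mat 1,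
       (\<xi> v* A + \<eta> - c *\<^sub>R \<xi>) v* ai)))"

definition fund :: "'n frame \<Rightarrow> real^'n^'n \<Rightarrow> real^'n \<Rightarrow> 'n frame" where
  "fund p A \<eta> = vector_derivative (\<lambda>t. gact p (hjet (mat 1 + t *\<^sub>R A) (t *\<^sub>R \<eta>))) (at 0)"

definition is_cartan_connection :: "('n::finite) frame set \<Rightarrow> ('n frame \<Rightarrow> 'n frame \<Rightarrow> 'n galg) \<Rightarrow> bool" where
  "is_cartan_connection P \<omega> \<longleftrightarrow>
     (\<forall>p\<in>P. \<exists>V \<alpha>. open V \<and> p \<in> V \<and> (\<forall>q\<in>V. linear (\<alpha> q)) \<and> (\<forall>v. cinf_on (\<lambda>q. \<alpha> q v) V)
              \<and> (\<forall>q\<in>P \<inter> V. \<forall>v\<in>tspace P q. \<omega> q v = \<alpha> q v))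
   \<and> (\<forall>p\<in>P. bij_betw (\<omega> p) (tspace P p) UNIV)
   \<and> (\<forall>p\<in>P. \<forall>A \<eta>. \<omega> p (fund p A \<eta>) = (0, A, \<eta>))
   \<and> (\<forall>p\<in>P. \<forall>a \<xi>. invertible a \<longrightarrow> (\<forall>v\<in>tspace P p.
        \<omega> (gact p (hjet a \<xi>)) (gact v (hjet a \<xi>))
          = Ad (matrix_inv a) (- (\<xi> v* matrix_inv a)) (\<omega> p v)))"

text \<open>Curvature component Omega^i_j = d omega^i_j + omega^i_k ^ omega^k_j + omega^i ^ omega_j
  - delta^i_j omega_k ^ omega^k, for omega^i_j the restriction of theta^i_j
  (so d omega^i_j is the restriction of d theta^i_j); alpha ^ beta (v,w) = alpha(v)beta(w)-alpha(w)beta(v).\<close>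
definition curv :: "(('n::finite) frame \<Rightarrow> 'n frame \<Rightarrow> 'n galg) \<Rightarrow> 'n frame \<Rightarrow> 'n frame \<Rightarrow> 'n frame \<Rightarrow> real^'n^'n" where
  "curv \<omega> p v w =
     (let o1 = (\<lambda>z. fst (\<omega> p z)); o2 = (\<lambda>z. fst (snd (\<omega> p z))); o3 = (\<lambda>z. snd (snd (\<omega> p z))) in
      dtheta2 p v w + (o2 v ** o2 w - o2 w ** o2 v)
      + (\<chi> i j. (o1 v)$i * (o3 w)$j - (o1 w)$i * (o3 v)$j)
      - (o3 v \<bullet> o1 w - o3 w \<bullet> o1 v) *\<^sub>R mat 1)"

definition normal_proj_conn ::
  "('n::finite \<Rightarrow> 'n \<Rightarrow> 'n \<Rightarrow> real^'n \<Rightarrow> real) \<Rightarrow> (real^'n) set \<Rightarrow> ('n frame \<Rightarrow> 'n frame \<Rightarrow> 'n galg) \<Rightarrow> bool" where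
  "normal_proj_conn \<Gamma> U \<omega> \<longleftrightarrow>
     (let P = proj_structure \<Gamma> U in
      is_cartan_connection P \<omega>
      \<and> (\<forall>p\<in>P. \<forall>v\<in>tspace P p. fst (\<omega> p v) = theta1 p v \<and> fst (snd (\<omega> p v)) = theta2 p v)
      \<and> (\<forall>p\<in>P. \<exists>K :: 'n \<Rightarrow> 'n \<Rightarrow> 'n \<Rightarrow> 'n \<Rightarrow> real.
            (\<forall>i j k l. K i j k l = - K i j l k)
          \<and> (\<forall>v\<in>tspace P p. \<forall>w\<in>tspace P p. \<forall>i j.
               curv \<omega> p v w $ i $ j
                 = (\<Sum>k\<in>UNIV. \<Sum>l\<in>UNIV. K i j k l * (fst (\<omega> p v))$k * (fst (\<omega> p w))$l))
          \<and> (\<forall>j l. (\<Sum>i\<in>UNIV. K i j i l) = 0)))"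

definition is_section :: "('n::finite \<Rightarrow> 'n \<Rightarrow> 'n \<Rightarrow> real^'n \<Rightarrow> real) \<Rightarrow> (real^'n) set \<Rightarrow> (real^'n \<Rightarrow> 'n frame) \<Rightarrow> bool" where
  "is_section \<Gamma> U \<sigma> \<longleftrightarrow> cinf_on \<sigma> U \<and> (\<forall>x\<in>U. \<sigma> x \<in> proj_structure \<Gamma> U \<and> fst (\<sigma> x) = x)"

text \<open>Components of pullbacks: sigma^* omega^i = dx^i; sigma^* omega^i_j = Pi^i_{jk} dx^k;
  sigma^* omega_j = Pi_{jk} dx^k.\<close>
definition pb_cond1 :: "(('n::finite) frame \<Rightarrow> 'n frame \<Rightarrow> 'n galg) \<Rightarrow> (real^'n) set \<Rightarrow> (real^'n \<Rightarrow> 'n frame) \<Rightarrow> bool" where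
  "pb_cond1 \<omega> U \<sigma> \<longleftrightarrow> (\<forall>x\<in>U. \<forall>w. fst (\<omega> (\<sigma> x) (frechet_derivative \<sigma> (at x) w)) = w)"

definition Pi_up :: "(('n::finite) frame \<Rightarrow> 'n frame \<Rightarrow> 'n galg) \<Rightarrow> (real^'n \<Rightarrow> 'n frame) \<Rightarrow> 'n \<Rightarrow> 'n \<Rightarrow> 'n \<Rightarrow> real^'n \<Rightarrow> real" where
  "Pi_up \<omega> \<sigma> i j k x = fst (snd (\<omega> (\<sigma> x) (frechet_derivative \<sigma> (at x) (axis k 1)))) $ i $ j"

definition Pi_low :: "(('n::finite) frame \<Rightarrow> 'n frame \<Rightarrow> 'n galg) \<Rightarrow> (real^'n \<Rightarrow> 'n frame) \<Rightarrow> 'n \<Rightarrow> 'n \<Rightarrow> real^'n \<Rightarrow> real" where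
  "Pi_low \<omega> \<sigma> j k x = snd (snd (\<omega> (\<sigma> x) (frechet_derivative \<sigma> (at x) (axis k 1)))) $ j"

definition mu :: "('n::finite \<Rightarrow> 'n \<Rightarrow> 'n \<Rightarrow> real^'n \<Rightarrow> real) \<Rightarrow> 'n \<Rightarrow> real^'n \<Rightarrow> real" where
  "mu \<Gamma> j x = (1/2) * (\<Sum>\<alpha>\<in>UNIV. \<Gamma> \<alpha> \<alpha> j x - \<Gamma> \<alpha> j \<alpha> x)"

definition nu :: "('n::finite \<Rightarrow> 'n \<Rightarrow> 'n \<Rightarrow> real^'n \<Rightarrow> real) \<Rightarrow> 'n \<Rightarrow> real^'n \<Rightarrow> real" where
  "nu \<Gamma> j x = - (1 / (2 * (real CARD('n) + 1))) * (\<Sum>\<alpha>\<in>UNIV. \<Gamma> \<alpha> \<alpha> j x + \<Gamma> \<alpha> j \<alpha> x)"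

definition PiG :: "('n::finite \<Rightarrow> 'n \<Rightarrow> 'n \<Rightarrow> real^'n \<Rightarrow> real) \<Rightarrow> 'n \<Rightarrow> 'n \<Rightarrow> 'n \<Rightarrow> real^'n \<Rightarrow> real" where
  "PiG \<Gamma> i j k x = \<Gamma> i j k x + kd i j * nu \<Gamma> k x + kd i k * nu \<Gamma> j x"

definition PiT :: "('n::finite \<Rightarrow> 'n \<Rightarrow> 'n \<Rightarrow> real^'n \<Rightarrow> real) \<Rightarrow> 'n \<Rightarrow> 'n \<Rightarrow> real^'n \<Rightarrow> real" where
  "PiT \<Gamma> j k x =
     (\<Sum>i\<in>UNIV. pder (axis i 1) (PiG \<Gamma> i j k) x) + pder (axis k 1) (mu \<Gamma> j) x
     - (\<Sum>\<alpha>\<in>UNIV. mu \<Gamma> \<alpha> x * PiG \<Gamma> \<alpha> j k x)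
     - (\<Sum>\<alpha>\<in>UNIV. \<Sum>\<beta>\<in>UNIV. PiG \<Gamma> \<alpha> j \<beta> x * PiG \<Gamma> \<beta> \<alpha> k x)"

definition PiL :: "('n::finite \<Rightarrow> 'n \<Rightarrow> 'n \<Rightarrow> real^'n \<Rightarrow> real) \<Rightarrow> 'n \<Rightarrow> 'n \<Rightarrow> real^'n \<Rightarrow> real" where
  "PiL \<Gamma> j k x = (-1 / ((real CARD('n))\<^sup>2 - 1)) * (real CARD('n) * PiT \<Gamma> j k x + PiT \<Gamma> k j x)"

end

theory Submission
  imports Defs
begin


lemma pder_deriv:
  assumes "(f has_derivative f') (at x)"
  shows "pder b f x = f' b"
proof -
  have "((\<lambda>t. x + t *\<^sub>R b) has_derivative (\<lambda>t. t *\<^sub>R b)) (at 0)"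
    by (auto intro!: derivative_eq_intros)
  moreover have "(f has_derivative f') (at (x + 0 *\<^sub>R b))" using assms by simp
  ultimately have "((\<lambda>t. f (x + t *\<^sub>R b)) has_derivative (\<lambda>t. f' (t *\<^sub>R b))) (at 0)"
    using has_derivative_compose[of "\<lambda>t. x + t *\<^sub>R b" _ 0 UNIV f f'] by (simp add: o_def)
  moreover have "(\<lambda>t. f' (t *\<^sub>R b)) = (\<lambda>t. t *\<^sub>R f' b)"
    using assms has_derivative_linear linear_scale by blast
  ultimately have "((\<lambda>t. f (x + t *\<^sub>R b)) has_vector_derivative f' b) (at 0)"
    by (simp add: has_vector_derivative_def)
  then show ?thesis unfolding pder_def by (rule vector_derivative_at)
qed

lemma pder_cong:
  fixes f g :: "'a::real_normed_vector \<Rightarrow> 'b::real_normed_vector"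
  assumes "open U" "x \<in> U" "\<And>y. y \<in> U \<Longrightarrow> f y = g y"
  shows "pder b f x = pder b g x"
proof -
  have ev: "\<forall>\<^sub>F t in nhds 0. f (x + t *\<^sub>R b) = g (x + t *\<^sub>R b)"
  proof -
    have "((\<lambda>t::real. x + t *\<^sub>R b) \<longlongrightarrow> x + 0 *\<^sub>R b) (nhds 0)"
      by (intro tendsto_intros filterlim_ident)
    then have "\<forall>\<^sub>F t in nhds 0. x + t *\<^sub>R b \<in> U"
      using assms(1,2) by (auto dest: topological_tendstoD)
    then show ?thesis
      by eventually_elim (use assms in auto)
  qed
  have "\<And>D. ((\<lambda>t. f (x + t *\<^sub>R b)) has_vector_derivative D) (at 0) \<longleftrightarrow>
             ((\<lambda>t. g (x + t *\<^sub>R b)) has_vector_derivative D) (at 0)"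
    using has_vector_derivative_cong_ev[where f="\<lambda>t. f (x + t *\<^sub>R b)" and S=UNIV and x=0 and g="\<lambda>t. g (x + t *\<^sub>R b)"] ev assms by (auto simp: eventually_mono)
  then show ?thesis unfolding pder_def vector_derivative_def by simp
qed

lemma pder_frechet:
  assumes "f differentiable (at x)"
  shows "pder b f x = frechet_derivative f (at x) b"
  using assms by (intro pder_deriv) (simp add: frechet_derivative_works)

lemma cdiff_cong:
  assumes "open U" "\<And>y. y \<in> U \<Longrightarrow> f y = g y" "cdiff k f U"
  shows "cdiff k g U"
  using assms(2,3)
proof (induction k arbitrary: f g)
  case 0
  then show ?case using continuous_on_cong by fastforce
next
  case (Suc k)
  have d: "g differentiable (at y)" if "y \<in> U" for y
  proof -
    have "f differentiable (at y)" using Suc.prems that by auto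
    then obtain f' where "(f has_derivative f') (at y)" by (auto simp: differentiable_def)
    then have "(g has_derivative f') (at y)"
      by (rule has_derivative_transform_within_open[OF _ assms(1) that]) (use Suc.prems in auto)
    then show ?thesis by (auto simp: differentiable_def)
  qed
  have "cdiff k (pder b g) U" if "b \<in> Basis" for b
  proof (rule Suc.IH[of "pder b f"])
    show "pder b f y = pder b g y" if "y \<in> U" for y
      by (rule pder_cong[OF assms(1) that]) (use Suc.prems in auto)
  qed (use Suc.prems that in auto)
  then show ?case using d by simp
qed

lemma cdiff_const: "open U \<Longrightarrow> cdiff k (\<lambda>x. c) U"
proof (induction k arbitrary: c)
  case 0 then show ?case by simp
next
  case (Suc k)
  have "cdiff k (pder b (\<lambda>x. c)) U" for b
    by (rule cdiff_cong[OF Suc.prems _ Suc.IH[OF Suc.prems, of 0]])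
       (simp add: pder_deriv[OF has_derivative_const])
  then show ?case by simp
qed

lemma cdiff_add:
  assumes "open U" "cdiff k f U" "cdiff k g U"
  shows "cdiff k (\<lambda>x. f x + g x) U"
  using assms(2,3)
proof (induction k arbitrary: f g)
  case 0 then show ?case by (simp add: continuous_on_add)
next
  case (Suc k)
  have e: "pder b (\<lambda>x. f x + g x) y = pder b f y + pder b g y" if "y \<in> U" for y b
  proof -
    have "f differentiable (at y)" "g differentiable (at y)" using Suc.prems that by auto
    then have "((\<lambda>x. f x + g x) has_derivative (\<lambda>h. frechet_derivative f (at y) h + frechet_derivative g (at y) h)) (at y)"
      by (intro has_derivative_add) (simp_all add: frechet_derivative_works[symmetric])
    then show ?thesis
      using pder_frechet[OF \<open>f differentiable (at y)\<close>] pder_frechet[OF \<open>g differentiable (at y)\<close>]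
      by (simp add: pder_deriv)
  qed
  have "cdiff k (pder b (\<lambda>x. f x + g x)) U" if "b \<in> Basis" for b
    by (rule cdiff_cong[OF assms(1), of "\<lambda>y. pder b f y + pder b g y"])
       (use e Suc that in auto)
  then show ?case using Suc.prems by auto
qed

lemma cdiff_linear_comp:
  assumes "open U" "bounded_linear L" "cdiff k f U"
  shows "cdiff k (\<lambda>x. L (f x)) U"
  using assms(3)
proof (induction k arbitrary: f)
  case 0 then show ?case
    using continuous_on_compose[of U f L] linear_continuous_on[OF assms(2)] by (simp add: o_def)
next
  case (Suc k)
  have e: "pder b (\<lambda>x. L (f x)) y = L (pder b f y)" if "y \<in> U" for y b
  proof -
    have "f differentiable (at y)" using Suc.prems that by auto
    then have "((\<lambda>x. L (f x)) has_derivative (\<lambda>h. L (frechet_derivative f (at y) h))) (at y)"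
      by (intro bounded_linear.has_derivative[OF assms(2)]) (simp add: frechet_derivative_works[symmetric])
    then show ?thesis
      using pder_frechet[OF \<open>f differentiable (at y)\<close>] by (simp add: pder_deriv)
  qed
  have "cdiff k (pder b (\<lambda>x. L (f x))) U" if "b \<in> Basis" for b
    by (rule cdiff_cong[OF assms(1), of "\<lambda>y. L (pder b f y)"])
       (use e Suc that in auto)
  moreover have "(\<lambda>x. L (f x)) differentiable (at y)" if "y \<in> U" for y
  proof -
    have "f differentiable (at y)" using Suc.prems that by auto
    then have "((\<lambda>x. L (f x)) has_derivative (\<lambda>h. L (frechet_derivative f (at y) h))) (at y)"
      by (intro bounded_linear.has_derivative[OF assms(2)]) (simp add: frechet_derivative_works[symmetric])
    then show ?thesis by (auto simp: differentiable_def)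
  qed
  ultimately show ?case by auto
qed

lemma cdiff_blinear:
  assumes "open U" "bounded_linear L"
  shows "cdiff k L U"
proof (cases k)
  case 0 then show ?thesis using linear_continuous_on[OF assms(2)] by simp
next
  case (Suc m)
  have "cdiff m (pder b L) U" for b
    by (rule cdiff_cong[OF assms(1) _ cdiff_const[OF assms(1), of m "L b"]])
       (simp add: pder_deriv[OF bounded_linear.has_derivative[OF assms(2) has_derivative_ident]])
  moreover have "L differentiable (at y)" for y
    using assms(2) bounded_linear_imp_differentiable by blast
  ultimately show ?thesis using Suc by simp
qed

lemma cdiff_sum:
  assumes "open U" "finite S" "\<And>i. i \<in> S \<Longrightarrow> cdiff k (f i) U"
  shows "cdiff k (\<lambda>x. \<Sum>i\<in>S. f i x) U"
  using assms(2,3)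
proof (induction S rule: finite_induct)
  case empty then show ?case using cdiff_const[OF assms(1)] by simp
next
  case (insert a S)
  then show ?case by (simp add: cdiff_add[OF assms(1)])
qed

lemma bl_axis: "bounded_linear (axis i :: 'b::euclidean_space \<Rightarrow> 'b^'n)"
proof -
  have "linear (axis i :: 'b::euclidean_space \<Rightarrow> 'b^'n)"
    by (rule linearI) (auto simp: axis_def vec_eq_iff)
  then show ?thesis by (simp add: linear_conv_bounded_linear)
qed

lemma vec_as_sum: "(\<chi> i. F i) = (\<Sum>i\<in>UNIV. axis i (F i))"
  by (simp add: vec_eq_iff axis_def)

lemma cdiff_vec:
  fixes f :: "'n::finite \<Rightarrow> 'a::euclidean_space \<Rightarrow> 'b::euclidean_space"
  assumes "open U" "\<And>i. cdiff k (f i) U"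
  shows "cdiff k (\<lambda>x. \<chi> i. f i x) U"
  unfolding vec_as_sum
  by (rule cdiff_sum[OF assms(1)]) (auto intro!: cdiff_linear_comp[OF assms(1) bl_axis assms(2)])




lemma tspace_deriv:
  fixes \<sigma> :: "'a::euclidean_space \<Rightarrow> 'b::real_normed_vector"
  assumes "open U" "x \<in> U" "\<sigma> differentiable (at x)" "\<And>y. y \<in> U \<Longrightarrow> \<sigma> y \<in> S"
  shows "frechet_derivative \<sigma> (at x) w \<in> tspace S (\<sigma> x)"
proof (cases "w = 0")
  case True
  have "linear (frechet_derivative \<sigma> (at x))"
    using assms(3) frechet_derivative_works has_derivative_linear by blast
  then have "frechet_derivative \<sigma> (at x) w = 0" using True linear_0 by blast
  then show ?thesis unfolding tspace_def
    by (intro CollectI exI[of _ "\<lambda>t. \<sigma> x"]) (auto simp: assms)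
next
  case False
  obtain e where e: "e > 0" "ball x e \<subseteq> U" using assms(1,2) open_contains_ball by blast
  define s where "s = e / (2 * norm w)"
  have s: "s > 0" using e False by (simp add: s_def)
  define \<phi> where "\<phi> t = s * sin (t / s)" for t
  have in_U: "x + \<phi> t *\<^sub>R w \<in> U" for t
  proof -
    have "\<bar>\<phi> t\<bar> \<le> s" using s by (simp add: \<phi>_def abs_mult)
    then have "norm (\<phi> t *\<^sub>R w) \<le> s * norm w" by (simp add: mult_right_mono)
    also have "\<dots> < e" using e False by (simp add: s_def)
    finally have "x + \<phi> t *\<^sub>R w \<in> ball x e" by (simp add: dist_norm)
    then show ?thesis using e by blast
  qed
  have d\<phi>: "(\<phi> has_real_derivative 1) (at 0)"
  proof -
    have "(\<phi> has_real_derivative s * (cos (0 / s) * (1 / s))) (at 0)"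
      unfolding \<phi>_def by (auto intro!: derivative_eq_intros)
    then show ?thesis using s by simp
  qed
  have dl: "((\<lambda>t. x + \<phi> t *\<^sub>R w) has_vector_derivative w) (at 0)"
    using d\<phi> by (auto intro!: derivative_eq_intros simp: has_real_derivative_iff_has_vector_derivative)
  have "\<phi> 0 = 0" by (simp add: \<phi>_def)
  have Dat: "(\<sigma> has_derivative frechet_derivative \<sigma> (at x)) (at x)"
    using assms(3) frechet_derivative_works[THEN iffD1] by blast
  have "(\<sigma> has_derivative frechet_derivative \<sigma> (at x)) (at ((\<lambda>t. x + \<phi> t *\<^sub>R w) 0) within range (\<lambda>t. x + \<phi> t *\<^sub>R w))"
    using \<open>\<phi> 0 = 0\<close> Dat by (simp add: has_derivative_at_withinI)
  from vector_derivative_diff_chain_within[OF dl this]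
  have "((\<sigma> \<circ> (\<lambda>t. x + \<phi> t *\<^sub>R w)) has_vector_derivative frechet_derivative \<sigma> (at x) w) (at 0)"
    by simp
  then show ?thesis unfolding tspace_def
    using in_U assms(4) \<open>\<phi> 0 = 0\<close> by (intro CollectI exI[of _ "\<sigma> \<circ> (\<lambda>t. x + \<phi> t *\<^sub>R w)"]) auto
qed




lemma deriv_comp_eq:
  fixes \<sigma> :: "'a::euclidean_space \<Rightarrow> 'b::real_normed_vector"
  assumes "open U" "x \<in> U" "\<sigma> differentiable (at x)" "bounded_linear L"
    "(g has_derivative g') (at x)" "\<And>y. y \<in> U \<Longrightarrow> L (\<sigma> y) = g y"
  shows "L (frechet_derivative \<sigma> (at x) w) = g' w"
proof -
  have "((\<lambda>y. L (\<sigma> y)) has_derivative (\<lambda>h. L (frechet_derivative \<sigma> (at x) h))) (at x)"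
    using assms(3) by (intro bounded_linear.has_derivative[OF assms(4)]) (simp add: frechet_derivative_works[symmetric])
  then have "(g has_derivative (\<lambda>h. L (frechet_derivative \<sigma> (at x) h))) (at x)"
    by (rule has_derivative_transform_within_open[OF _ assms(1,2)]) (use assms(6) in auto)
  from has_derivative_unique[OF this assms(5)] show ?thesis by metis
qed

lemma theta1_eq: "theta1 p v = matrix_inv (fst (snd p)) *v fst v"
  by (cases p; cases v) auto

lemma theta2_eq: "theta2 p v = matrix_inv (fst (snd p)) ** fst (snd v)
     - (\<chi> i j. \<Sum>\<alpha>\<in>UNIV. \<Sum>\<beta>\<in>UNIV. (matrix_inv (fst (snd p)))$i$\<alpha> * (snd (snd p))$\<alpha>$j$\<beta> * (matrix_inv (fst (snd p)) *v fst v)$\<beta>)"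
  by (cases p; cases v) auto

lemma matrix_inv_1: "matrix_inv (mat 1 :: real^'n^'n) = mat 1"
proof -
  have ex: "\<exists>A'::real^'n^'n. mat 1 ** A' = mat 1 \<and> A' ** mat 1 = mat 1" by (intro exI[of _ "mat 1"]) simp
  have "mat 1 ** matrix_inv (mat 1 :: real^'n^'n) = mat 1"
    unfolding matrix_inv_def using someI_ex[OF ex] by blast
  then show ?thesis by simp
qed

lemma matrix_inv_right: "invertible (a::real^'n^'n) \<Longrightarrow> a ** matrix_inv a = mat 1"
  unfolding invertible_def matrix_inv_def by (rule someI_ex[THEN conjunct1])

lemma mat1_nth: "(mat 1 :: real^'n^'n) $ i $ j = kd i j"
  by (simp add: mat_def kd_def)

lemma kd_sum1[simp]: "(\<Sum>l\<in>UNIV. kd i l * f l) = (f i :: real)" for f :: "'n::finite \<Rightarrow> real"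
  proof -
  have "(\<Sum>l\<in>UNIV. kd i l * f l) = (\<Sum>l\<in>UNIV. if l = i then f i else 0)"
    by (rule sum.cong) (auto simp: kd_def)
  also have "\<dots> = f i" by simp
  finally show ?thesis .
qed
lemma kd_sum2[simp]: "(\<Sum>l\<in>UNIV. kd l i * f l) = (f i :: real)" for f :: "'n::finite \<Rightarrow> real"
  proof -
  have "(\<Sum>l\<in>UNIV. kd l i * f l) = (\<Sum>l\<in>UNIV. if l = i then f i else 0)"
    by (rule sum.cong) (auto simp: kd_def)
  also have "\<dots> = f i" by simp
  finally show ?thesis .
qed
lemma kd_sum3[simp]: "(\<Sum>l\<in>UNIV. f l * kd i l) = (f i :: real)" for f :: "'n::finite \<Rightarrow> real"
  proof -
  have "(\<Sum>l\<in>UNIV. f l * kd i l) = (\<Sum>l\<in>UNIV. if l = i then f i else 0)"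
    by (rule sum.cong) (auto simp: kd_def)
  also have "\<dots> = f i" by simp
  finally show ?thesis .
qed
lemma kd_sum4[simp]: "(\<Sum>l\<in>UNIV. f l * kd l i) = (f i :: real)" for f :: "'n::finite \<Rightarrow> real"
  proof -
  have "(\<Sum>l\<in>UNIV. f l * kd l i) = (\<Sum>l\<in>UNIV. if l = i then f i else 0)"
    by (rule sum.cong) (auto simp: kd_def)
  also have "\<dots> = f i" by simp
  finally show ?thesis .
qed
lemma kd_sum_diag: "(\<Sum>l\<in>UNIV. kd l (l::'n::finite)) = real CARD('n)"
  by (simp add: kd_def)

lemma gact_form:
  "gact (x, mat 1, \<chi> i j k. - \<Gamma> i j k x) (hjet a \<xi>) =
    (x, a, \<chi> i j k. - (\<Sum>l\<in>UNIV. \<Sum>m\<in>UNIV. \<Gamma> i l m x * a$l$j * a$m$k) - (a$i$j * \<xi>$k + \<xi>$j * a$i$k))"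
  by (simp add: hjet_def mat1_nth vec_eq_iff sum_negf sum_subtractf sum.distrib ring_distribs)




lemma cdiff_cmult: "open U \<Longrightarrow> cdiff k f U \<Longrightarrow> cdiff k (\<lambda>x. c * f x :: real) U"
  by (rule cdiff_linear_comp[where L="\<lambda>r. c * r"]) (auto intro: bounded_linear_mult_right)

lemma cdiff_diff: "open U \<Longrightarrow> cdiff k f U \<Longrightarrow> cdiff k g U \<Longrightarrow> cdiff k (\<lambda>x. f x - g x :: real) U"
  using cdiff_add[of U k f "\<lambda>x. (-1) * g x"] cdiff_cmult[of U k g "-1"] by simp

locale smoothG =
  fixes \<Gamma> :: "'n::finite \<Rightarrow> 'n \<Rightarrow> 'n \<Rightarrow> real^'n \<Rightarrow> real" and U :: "(real^'n) set"
  assumes opn: "open U" and sm: "\<forall>i j k. cinf_on (\<Gamma> i j k) U"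
begin

lemma cdG: "cdiff m (\<Gamma> i j k) U" using sm by (simp add: cinf_on_def)

lemma cd_nu: "cdiff m (nu \<Gamma> j) U"
proof -
  have e: "nu \<Gamma> j = (\<lambda>x. (- (1 / (2 * (real CARD('n) + 1)))) * (\<Sum>\<alpha>\<in>UNIV. \<Gamma> \<alpha> \<alpha> j x + \<Gamma> \<alpha> j \<alpha> x))"
    by (rule ext) (simp add: nu_def)
  show ?thesis unfolding e
    by (intro cdiff_cmult cdiff_sum cdiff_add opn cdG) auto
qed

lemma cd_mu: "cdiff m (mu \<Gamma> j) U"
proof -
  have e: "mu \<Gamma> j = (\<lambda>x. (1/2) * (\<Sum>\<alpha>\<in>UNIV. \<Gamma> \<alpha> \<alpha> j x - \<Gamma> \<alpha> j \<alpha> x))"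
    by (rule ext) (simp add: mu_def)
  show ?thesis unfolding e
    by (intro cdiff_cmult cdiff_sum cdiff_diff opn cdG) auto
qed

lemma cd_PiG: "cdiff m (PiG \<Gamma> i j k) U"
proof -
  have e: "PiG \<Gamma> i j k = (\<lambda>x. \<Gamma> i j k x + kd i j * nu \<Gamma> k x + kd i k * nu \<Gamma> j x)"
    by (rule ext) (simp add: PiG_def)
  show ?thesis unfolding e
    by (intro cdiff_cmult cdiff_add opn cdG cd_nu)
qed

lemma diff_PiG: "x \<in> U \<Longrightarrow> PiG \<Gamma> i j k differentiable (at x)"
  using cd_PiG[of "Suc 0"] by auto

lemma diff_mu: "x \<in> U \<Longrightarrow> mu \<Gamma> j differentiable (at x)"
  using cd_mu[of "Suc 0"] by auto

definition sig0 :: "real^'n \<Rightarrow> 'n frame" where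
  "sig0 x = (x, mat 1, \<chi> i j k. - PiG \<Gamma> i j k x)"

lemma cinf_sig0: "cinf_on sig0 U"
  unfolding cinf_on_def
proof
  fix m
  have eq: "sig0 = (\<lambda>x. (\<lambda>v. (v, 0, 0)) x + ((0, mat 1, 0) + (\<lambda>w. (0, 0, w)) (\<chi> i j k. - PiG \<Gamma> i j k x)))"
    by (rule ext) (simp add: sig0_def)
  have bl1: "bounded_linear (\<lambda>v::real^'n. (v, 0::real^'n^'n, 0::real^'n^'n^'n))"
    by (intro bounded_linear_Pair bounded_linear_ident bounded_linear_zero)
  have bl2: "bounded_linear (\<lambda>w::real^'n^'n^'n. (0::real^'n, 0::real^'n^'n, w))"
    by (intro bounded_linear_Pair bounded_linear_ident bounded_linear_zero)
  have c3: "cdiff m (\<lambda>x. \<chi> i j k. - PiG \<Gamma> i j k x) U"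
    by (intro cdiff_vec opn cdiff_cmult[where c="-1", simplified] cd_PiG)
  show "cdiff m sig0 U"
    unfolding eq
    by (intro cdiff_add opn cdiff_const cdiff_linear_comp[OF opn bl2 c3] cdiff_blinear[OF opn bl1])
qed

end



lemma kd_sum_nested: "(\<Sum>\<alpha>\<in>UNIV. \<Sum>\<beta>\<in>UNIV. kd i \<alpha> * g \<alpha> \<beta>) = (\<Sum>\<beta>\<in>UNIV. g i \<beta> :: real)"
  for g :: "'n::finite \<Rightarrow> 'm::finite \<Rightarrow> real"
  by (simp add: sum_distrib_left[symmetric])

locale npc = smoothG +
  fixes \<omega> :: "'a frame \<Rightarrow> 'a frame \<Rightarrow> 'a galg"
  assumes npc: "normal_proj_conn \<Gamma> U \<omega>"
begin

abbreviation "PP \<equiv> proj_structure \<Gamma> U"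

lemma om_theta: "p \<in> PP \<Longrightarrow> v \<in> tspace PP p \<Longrightarrow> fst (\<omega> p v) = theta1 p v \<and> fst (snd (\<omega> p v)) = theta2 p v"
  using npc unfolding normal_proj_conn_def Let_def by blast

lemma diff_of_cinf: "cinf_on \<sigma> U \<Longrightarrow> x \<in> U \<Longrightarrow> \<sigma> differentiable (at x)"
  unfolding cinf_on_def by (metis cdiff.simps(2))

lemma fst_D:
  fixes \<sigma> :: "real^'a \<Rightarrow> 'a frame"
  assumes "cinf_on \<sigma> U" "\<forall>y\<in>U. fst (\<sigma> y) = y" "x \<in> U"
  shows "fst (frechet_derivative \<sigma> (at x) w) = w"
  using deriv_comp_eq[OF opn assms(3) diff_of_cinf[OF assms(1,3)] bounded_linear_fst has_derivative_ident, of w] assms(2)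
  by auto

lemma fst_snd_D:
  fixes \<sigma> :: "real^'a \<Rightarrow> 'a frame"
  assumes "cinf_on \<sigma> U" "\<forall>y\<in>U. fst (snd (\<sigma> y)) = mat 1" "x \<in> U"
  shows "fst (snd (frechet_derivative \<sigma> (at x) w)) = 0"
proof -
  have bl: "bounded_linear (\<lambda>p::'a frame. fst (snd p))"
    using bounded_linear_compose[OF bounded_linear_fst bounded_linear_snd] by (simp add: o_def)
  have "fst (snd (frechet_derivative \<sigma> (at x) w)) = (\<lambda>h. 0) w"
    by (rule deriv_comp_eq[OF opn assms(3) diff_of_cinf[OF assms(1,3)] bl, where g="\<lambda>y. mat 1"])
       (use assms(2) in \<open>simp_all add: has_derivative_const\<close>)
  then show ?thesis by simp
qed

lemma sec_generic:
  fixes \<sigma> :: "real^'a \<Rightarrow> 'a frame"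
  assumes "cinf_on \<sigma> U" "\<forall>y\<in>U. \<sigma> y \<in> PP" "\<forall>y\<in>U. fst (\<sigma> y) = y"
    "\<forall>y\<in>U. fst (snd (\<sigma> y)) = mat 1" "x \<in> U"
  shows "frechet_derivative \<sigma> (at x) w \<in> tspace PP (\<sigma> x)"
    and "fst (\<omega> (\<sigma> x) (frechet_derivative \<sigma> (at x) w)) = w"
    and "fst (snd (\<omega> (\<sigma> x) (frechet_derivative \<sigma> (at x) w))) =
          (\<chi> i j. - (\<Sum>\<beta>\<in>UNIV. snd (snd (\<sigma> x)) $ i $ j $ \<beta> * w $ \<beta>))"
proof -
  show ts: "frechet_derivative \<sigma> (at x) w \<in> tspace PP (\<sigma> x)"
    using tspace_deriv[OF opn assms(5) diff_of_cinf[OF assms(1,5)]] assms(2) by blast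
  note th = om_theta[OF assms(2)[rule_format, OF assms(5)] ts]
  have f1: "fst (frechet_derivative \<sigma> (at x) w) = w" by (rule fst_D) (use assms in auto)
  have f2: "fst (snd (frechet_derivative \<sigma> (at x) w)) = 0" by (rule fst_snd_D) (use assms in auto)
  have m: "fst (snd (\<sigma> x)) = mat 1" using assms(4,5) by auto
  show "fst (\<omega> (\<sigma> x) (frechet_derivative \<sigma> (at x) w)) = w"
    using th f1 m by (simp add: theta1_eq matrix_inv_1)
  show "fst (snd (\<omega> (\<sigma> x) (frechet_derivative \<sigma> (at x) w))) =
          (\<chi> i j. - (\<Sum>\<beta>\<in>UNIV. snd (snd (\<sigma> x)) $ i $ j $ \<beta> * w $ \<beta>))"
    using th f1 f2 m by (simp add: theta2_eq matrix_inv_1 mat1_nth vec_eq_iff sum_negf mult.assoc kd_sum_nested)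
qed

lemma sec_form:
  assumes "is_section \<Gamma> U \<sigma>" "pb_cond1 \<omega> U \<sigma>" "x \<in> U"
  shows "\<exists>\<xi>. \<sigma> x = (x, mat 1, \<chi> i j k. - \<Gamma> i j k x - (kd i j * \<xi>$k + \<xi>$j * kd i k))"
proof -
  have sec: "cinf_on \<sigma> U" "\<forall>y\<in>U. \<sigma> y \<in> PP" "\<forall>y\<in>U. fst (\<sigma> y) = y"
    using assms(1) unfolding is_section_def by auto
  have form: "\<exists>a \<xi>. invertible a \<and> \<sigma> y = (y, a, \<chi> i j k. - (\<Sum>l\<in>UNIV. \<Sum>m\<in>UNIV. \<Gamma> i l m y * a$l$j * a$m$k) - (a$i$j * \<xi>$k + \<xi>$j * a$i$k))"
    if "y \<in> U" for y
  proof -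
    obtain x' a \<xi> where "\<sigma> y = gact (x', mat 1, \<chi> i j k. - \<Gamma> i j k x') (hjet a \<xi>)" "invertible a"
    proof -
      have "\<sigma> y \<in> PP" using sec(2) \<open>y \<in> U\<close> by blast
      then show ?thesis unfolding proj_structure_def mem_Collect_eq using that by blast
    qed
    moreover have "fst (\<sigma> y) = x'" using calculation(1) by (simp add: gact_form)
    then have "x' = y" using sec(3) \<open>y \<in> U\<close> by auto
    ultimately show ?thesis by (auto simp: gact_form)
  qed
  have a1: "fst (snd (\<sigma> y)) = mat 1" if "y \<in> U" for y
  proof -
    obtain a \<xi> where a: "invertible a" and s: "\<sigma> y = (y, a, \<chi> i j k. - (\<Sum>l\<in>UNIV. \<Sum>m\<in>UNIV. \<Gamma> i l m y * a$l$j * a$m$k) - (a$i$j * \<xi>$k + \<xi>$j * a$i$k))"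
      using form[OF \<open>y \<in> U\<close>] by blast
    have "matrix_inv a *v w = w" for w
    proof -
      have ts: "frechet_derivative \<sigma> (at y) w \<in> tspace PP (\<sigma> y)"
        using tspace_deriv[OF opn that diff_of_cinf[OF sec(1) that]] sec(2) by blast
      note th = om_theta[OF sec(2)[rule_format, OF that] ts]
      have f1: "fst (frechet_derivative \<sigma> (at y) w) = w" by (rule fst_D) (use sec that in auto)
      have "fst (\<omega> (\<sigma> y) (frechet_derivative \<sigma> (at y) w)) = w"
        using assms(2) that unfolding pb_cond1_def by blast
      then show ?thesis using th f1 s by (simp add: theta1_eq)
    qed
    then have "matrix_inv a = mat 1" by (simp add: matrix_eq)
    then have "a = mat 1" using matrix_inv_right[OF a] by simp
    then show ?thesis using s by simp
  qed
  obtain a \<xi> where s: "\<sigma> x = (x, a, \<chi> i j k. - (\<Sum>l\<in>UNIV. \<Sum>m\<in>UNIV. \<Gamma> i l m x * a$l$j * a$m$k) - (a$i$j * \<xi>$k + \<xi>$j * a$i$k))"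
    using form[OF assms(3)] by blast
  have "a = mat 1" using a1[OF assms(3)] s by simp
  then show ?thesis using s by (intro exI[of _ \<xi>]) (simp add: mat1_nth)
qed

end



lemma kd_diag_mult: "(\<Sum>i\<in>UNIV. kd i (i::'n::finite) * c) = real CARD('n) * c"
  by (simp add: sum_distrib_right[symmetric] kd_sum_diag)
lemma kd_diag_mult2: "(\<Sum>i\<in>UNIV. c * kd i (i::'n::finite)) = real CARD('n) * c"
  by (simp add: sum_distrib_left[symmetric] kd_sum_diag)

lemma tr1:
  fixes \<Gamma> :: "'n::finite \<Rightarrow> 'n \<Rightarrow> 'n \<Rightarrow> real^'n \<Rightarrow> real"
  shows "(\<Sum>i\<in>UNIV. PiG \<Gamma> i i k x) = mu \<Gamma> k x"
proof -
  define N where "N = real CARD('n)"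
  define A where "A = (\<Sum>\<alpha>\<in>UNIV. \<Gamma> \<alpha> \<alpha> k x)"
  define B where "B = (\<Sum>\<alpha>\<in>UNIV. \<Gamma> \<alpha> k \<alpha> x)"
  have N: "N + 1 > 0" by (simp add: N_def)
  have nu: "nu \<Gamma> k x = - (A + B) / (2 * (N + 1))"
    by (simp add: nu_def A_def B_def N_def sum.distrib) (simp add: field_simps)
  have mu: "mu \<Gamma> k x = (A - B) / 2"
    by (simp add: mu_def A_def B_def sum_subtractf)
  have "(\<Sum>i\<in>UNIV. PiG \<Gamma> i i k x) = A + N * nu \<Gamma> k x + nu \<Gamma> k x"
    by (simp add: PiG_def sum.distrib A_def N_def kd_diag_mult)
  also have "\<dots> = (A - B) / 2"
  proof -
    have "(N + 1) * nu \<Gamma> k x = - (A + B) / 2" using N unfolding nu by (simp add: field_simps)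
    then show ?thesis by (simp add: algebra_simps)
  qed
  finally show ?thesis using mu by simp
qed

lemma tr2:
  fixes \<Gamma> :: "'n::finite \<Rightarrow> 'n \<Rightarrow> 'n \<Rightarrow> real^'n \<Rightarrow> real"
  shows "(\<Sum>i\<in>UNIV. PiG \<Gamma> i j i x) = - mu \<Gamma> j x"
proof -
  define N where "N = real CARD('n)"
  define A where "A = (\<Sum>\<alpha>\<in>UNIV. \<Gamma> \<alpha> \<alpha> j x)"
  define B where "B = (\<Sum>\<alpha>\<in>UNIV. \<Gamma> \<alpha> j \<alpha> x)"
  have N: "N + 1 > 0" by (simp add: N_def)
  have nu: "nu \<Gamma> j x = - (A + B) / (2 * (N + 1))"
    by (simp add: nu_def A_def B_def N_def sum.distrib) (simp add: field_simps)
  have mu: "mu \<Gamma> j x = (A - B) / 2"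
    by (simp add: mu_def A_def B_def sum_subtractf)
  have "(\<Sum>i\<in>UNIV. PiG \<Gamma> i j i x) = B + nu \<Gamma> j x + N * nu \<Gamma> j x"
    by (simp add: PiG_def sum.distrib B_def N_def kd_diag_mult)
  also have "\<dots> = - (A - B) / 2"
  proof -
    have "(N + 1) * nu \<Gamma> j x = - (A + B) / 2" using N unfolding nu by (simp add: field_simps)
    then show ?thesis by (simp add: algebra_simps)
  qed
  finally show ?thesis using mu by simp
qed

lemma xi1:
  fixes \<Gamma> :: "'n::finite \<Rightarrow> 'n \<Rightarrow> 'n \<Rightarrow> real^'n \<Rightarrow> real"
  assumes "\<forall>k. (\<Sum>i\<in>UNIV. \<Gamma> i i k x + kd i i * \<xi>$k + \<xi>$i * kd i k) = mu \<Gamma> k x"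
  shows "\<xi> = (\<chi> k. nu \<Gamma> k x)"
proof -
  have "\<xi>$k = nu \<Gamma> k x" for k
  proof -
    have N: "real CARD('n) + 1 > 0" by simp
    have "(\<Sum>i\<in>UNIV. \<Gamma> i i k x) + real CARD('n) * \<xi>$k + \<xi>$k = mu \<Gamma> k x"
      using assms by (simp add: sum.distrib kd_diag_mult)
    moreover have "(\<Sum>i\<in>UNIV. \<Gamma> i i k x) + real CARD('n) * nu \<Gamma> k x + nu \<Gamma> k x = mu \<Gamma> k x"
      using tr1[of \<Gamma> k x] by (simp add: PiG_def sum.distrib kd_diag_mult)
    ultimately have "(real CARD('n) + 1) * (\<xi>$k - nu \<Gamma> k x) = 0" by (simp add: algebra_simps)
    then show ?thesis using N by simp
  qed
  then show ?thesis by (simp add: vec_eq_iff)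
qed

lemma xi2:
  fixes \<Gamma> :: "'n::finite \<Rightarrow> 'n \<Rightarrow> 'n \<Rightarrow> real^'n \<Rightarrow> real"
  assumes "\<forall>j. (\<Sum>i\<in>UNIV. \<Gamma> i j i x + kd i j * \<xi>$i + \<xi>$j * kd i i) = - mu \<Gamma> j x"
  shows "\<xi> = (\<chi> k. nu \<Gamma> k x)"
proof -
  have "\<xi>$j = nu \<Gamma> j x" for j
  proof -
    have N: "real CARD('n) + 1 > 0" by simp
    have "(\<Sum>i\<in>UNIV. \<Gamma> i j i x) + \<xi>$j + real CARD('n) * \<xi>$j = - mu \<Gamma> j x"
      using assms by (simp add: sum.distrib kd_diag_mult2)
    moreover have "(\<Sum>i\<in>UNIV. \<Gamma> i j i x) + nu \<Gamma> j x + real CARD('n) * nu \<Gamma> j x = - mu \<Gamma> j x"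
      using tr2[of \<Gamma> j x] by (simp add: PiG_def sum.distrib kd_diag_mult)
    ultimately have "(real CARD('n) + 1) * (\<xi>$j - nu \<Gamma> j x) = 0" by (simp add: algebra_simps)
    then show ?thesis using N by simp
  qed
  then show ?thesis by (simp add: vec_eq_iff)
qed




lemma axis_kd: "(axis k (1::real)) $ b = kd b k"
  by (simp add: axis_def kd_def)

lemma inv_mat1: "invertible (mat 1 :: real^'n^'n)"
  unfolding invertible_def by (intro exI[of _ "mat 1"]) simp

lemma kd_sum_2d: "(\<Sum>l\<in>UNIV. \<Sum>m\<in>UNIV. f l m * (kd l a * kd m b)) = (f a b :: real)"
  for f :: "'n::finite \<Rightarrow> 'n \<Rightarrow> real"
proof -
  have "(\<Sum>l\<in>UNIV. \<Sum>m\<in>UNIV. f l m * (kd l a * kd m b)) = (\<Sum>l\<in>UNIV. (\<Sum>m\<in>UNIV. (f l m * kd l a) * kd m b))"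
    by (simp add: mult.assoc)
  also have "\<dots> = f a b" by simp
  finally show ?thesis .
qed

context npc
begin

lemma sig0_in: "y \<in> U \<Longrightarrow> sig0 y \<in> PP"
proof -
  assume y: "y \<in> U"
  have "sig0 y = gact (y, mat 1, \<chi> i j k. - \<Gamma> i j k y) (hjet (mat 1) (\<chi> k. nu \<Gamma> k y))"
    unfolding gact_form by (simp add: sig0_def mat1_nth vec_eq_iff PiG_def kd_sum_2d)
  then show ?thesis unfolding proj_structure_def using y inv_mat1 by blast
qed

lemma sig0_section: "is_section \<Gamma> U sig0"
  unfolding is_section_def using cinf_sig0 sig0_in by (simp add: sig0_def)

lemma sig0_gen:
  assumes "x \<in> U"
  shows "frechet_derivative sig0 (at x) w \<in> tspace PP (sig0 x)"
    and "fst (\<omega> (sig0 x) (frechet_derivative sig0 (at x) w)) = w"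
    and "fst (snd (\<omega> (sig0 x) (frechet_derivative sig0 (at x) w))) =
          (\<chi> i j. - (\<Sum>\<beta>\<in>UNIV. snd (snd (sig0 x)) $ i $ j $ \<beta> * w $ \<beta>))"
  using sec_generic[OF cinf_sig0 _ _ _ assms] sig0_in by (auto simp: sig0_def)

lemma sig0_pb: "pb_cond1 \<omega> U sig0"
  unfolding pb_cond1_def using sig0_gen(2) by blast

lemma sig0_Pi_up: "x \<in> U \<Longrightarrow> Pi_up \<omega> sig0 i j k x = PiG \<Gamma> i j k x"
  unfolding Pi_up_def using sig0_gen(3)[of x "axis k 1"] by (simp add: sig0_def axis_kd sum_negf)

lemma valid_Pi_up:
  assumes "is_section \<Gamma> U \<sigma>" "pb_cond1 \<omega> U \<sigma>" "x \<in> U"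
  obtains \<xi> where "\<sigma> x = (x, mat 1, \<chi> i j k. - \<Gamma> i j k x - (kd i j * \<xi>$k + \<xi>$j * kd i k))"
    and "\<And>i j k. Pi_up \<omega> \<sigma> i j k x = \<Gamma> i j k x + kd i j * \<xi>$k + \<xi>$j * kd i k"
proof -
  have sec: "cinf_on \<sigma> U" "\<forall>y\<in>U. \<sigma> y \<in> PP" "\<forall>y\<in>U. fst (\<sigma> y) = y"
    using assms(1) unfolding is_section_def by auto
  have m1: "\<forall>y\<in>U. fst (snd (\<sigma> y)) = mat 1"
    using sec_form[OF assms(1,2)] by fastforce
  obtain \<xi> where s: "\<sigma> x = (x, mat 1, \<chi> i j k. - \<Gamma> i j k x - (kd i j * \<xi>$k + \<xi>$j * kd i k))"
    using sec_form[OF assms] by blast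
  have "Pi_up \<omega> \<sigma> i j k x = \<Gamma> i j k x + kd i j * \<xi>$k + \<xi>$j * kd i k" for i j k
    unfolding Pi_up_def using sec_generic(3)[OF sec m1 assms(3), of "axis k 1"] s
    by (simp add: axis_kd sum_negf sum_subtractf sum.distrib)
  with s that show ?thesis by blast
qed

lemma valid_eq1:
  assumes "is_section \<Gamma> U \<sigma>" "pb_cond1 \<omega> U \<sigma>" "x \<in> U"
    "\<forall>k. (\<Sum>i\<in>UNIV. Pi_up \<omega> \<sigma> i i k x) = mu \<Gamma> k x"
  shows "\<sigma> x = sig0 x"
proof -
  obtain \<xi> where s: "\<sigma> x = (x, mat 1, \<chi> i j k. - \<Gamma> i j k x - (kd i j * \<xi>$k + \<xi>$j * kd i k))"
    and p: "\<And>i j k. Pi_up \<omega> \<sigma> i j k x = \<Gamma> i j k x + kd i j * \<xi>$k + \<xi>$j * kd i k"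
    using valid_Pi_up[OF assms(1-3)] by blast
  have "\<xi> = (\<chi> k. nu \<Gamma> k x)" by (rule xi1) (use assms(4) p in simp)
  then show ?thesis using s by (simp add: sig0_def PiG_def vec_eq_iff algebra_simps)
qed

lemma valid_eq2:
  assumes "is_section \<Gamma> U \<sigma>" "pb_cond1 \<omega> U \<sigma>" "x \<in> U"
    "\<forall>j. (\<Sum>i\<in>UNIV. Pi_up \<omega> \<sigma> i j i x) = - mu \<Gamma> j x"
  shows "\<sigma> x = sig0 x"
proof -
  obtain \<xi> where s: "\<sigma> x = (x, mat 1, \<chi> i j k. - \<Gamma> i j k x - (kd i j * \<xi>$k + \<xi>$j * kd i k))"
    and p: "\<And>i j k. Pi_up \<omega> \<sigma> i j k x = \<Gamma> i j k x + kd i j * \<xi>$k + \<xi>$j * kd i k"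
    using valid_Pi_up[OF assms(1-3)] by blast
  have "\<xi> = (\<chi> k. nu \<Gamma> k x)" by (rule xi2) (use assms(4) p in simp)
  then show ?thesis using s by (simp add: sig0_def PiG_def vec_eq_iff algebra_simps)
qed

lemma valid_PiG:
  assumes "is_section \<Gamma> U \<sigma>" "pb_cond1 \<omega> U \<sigma>" "x \<in> U"
    "\<forall>k. (\<Sum>i\<in>UNIV. Pi_up \<omega> \<sigma> i i k x) = mu \<Gamma> k x"
  shows "Pi_up \<omega> \<sigma> i j k x = PiG \<Gamma> i j k x"
proof -
  obtain \<xi> where s: "\<sigma> x = (x, mat 1, \<chi> i j k. - \<Gamma> i j k x - (kd i j * \<xi>$k + \<xi>$j * kd i k))"
    and p: "\<And>i j k. Pi_up \<omega> \<sigma> i j k x = \<Gamma> i j k x + kd i j * \<xi>$k + \<xi>$j * kd i k"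
    using valid_Pi_up[OF assms(1-3)] by blast
  have "\<xi> = (\<chi> k. nu \<Gamma> k x)" by (rule xi1) (use assms(4) p in simp)
  then show ?thesis using p by (simp add: PiG_def)
qed

end



lemma curv_expand:
  assumes "\<omega> p v = (a, A, \<eta>)" "\<omega> p w = (b, B, \<zeta>)"
  shows "curv \<omega> p v w $ i $ j = dtheta2 p v w $ i $ j
     + (\<Sum>m\<in>UNIV. A$i$m * B$m$j) - (\<Sum>m\<in>UNIV. B$i$m * A$m$j)
     + (a$i * \<zeta>$j - b$i * \<eta>$j) - ((\<Sum>m\<in>UNIV. \<eta>$m * b$m) - (\<Sum>m\<in>UNIV. \<zeta>$m * a$m)) * kd i j"
  using assms by (simp add: curv_def Let_def matrix_matrix_mult_def inner_vec_def mat1_nth)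

lemma pder_sum:
  fixes f :: "'i \<Rightarrow> 'a::real_normed_vector \<Rightarrow> 'b::real_normed_vector"
  assumes "finite S" "\<And>i. i \<in> S \<Longrightarrow> f i differentiable (at x)"
  shows "pder b (\<lambda>y. \<Sum>i\<in>S. f i y) x = (\<Sum>i\<in>S. pder b (f i) x)"
proof -
  have "((\<lambda>y. \<Sum>i\<in>S. f i y) has_derivative (\<lambda>h. \<Sum>i\<in>S. frechet_derivative (f i) (at x) h)) (at x)"
    by (rule has_derivative_sum) (use assms(2) in \<open>simp add: frechet_derivative_works[symmetric]\<close>)
  then have "pder b (\<lambda>y. \<Sum>i\<in>S. f i y) x = (\<Sum>i\<in>S. frechet_derivative (f i) (at x) b)"
    by (simp add: pder_deriv)
  also have "\<dots> = (\<Sum>i\<in>S. pder b (f i) x)"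
    by (rule sum.cong) (simp_all add: pder_frechet assms(2))
  finally show ?thesis .
qed

lemma pder_neg:
  fixes f :: "'a::real_normed_vector \<Rightarrow> 'b::real_normed_vector"
  assumes "f differentiable (at x)"
  shows "pder b (\<lambda>y. - f y) x = - pder b f x"
proof -
  have "((\<lambda>y. - f y) has_derivative (\<lambda>h. - frechet_derivative f (at x) h)) (at x)"
    by (rule has_derivative_minus) (use assms in \<open>simp add: frechet_derivative_works[symmetric]\<close>)
  then show ?thesis using pder_frechet[OF assms] by (simp add: pder_deriv)
qed

lemma solve2:
  fixes T P :: "'n \<Rightarrow> 'n \<Rightarrow> real"
  assumes "N\<^sup>2 \<noteq> 1" "\<And>j l. T j l + N * P j l - P l j = 0"
  shows "P j l = (-1 / (N\<^sup>2 - 1)) * (N * T j l + T l j)"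
proof -
  have e1: "T j l + N * P j l - P l j = 0" and e2: "T l j + N * P l j - P j l = 0" using assms(2) by auto
  have "(N\<^sup>2 - 1) * P j l = - (N * T j l + T l j)"
  proof -
    have "N * (T j l + N * P j l - P l j) + (T l j + N * P l j - P j l) = 0" using e1 e2 by simp
    then show ?thesis by (simp add: power2_eq_square algebra_simps)
  qed
  moreover have "N\<^sup>2 - 1 \<noteq> 0" using assms(1) by simp
  ultimately show ?thesis by (simp add: field_simps)
qed




context npc
begin

lemma lin_ss: "bounded_linear (\<lambda>q::'a frame. snd (snd q) $ i $ j $ l)"
proof -
  have "linear (\<lambda>q::'a frame. snd (snd q) $ i $ j $ l)"
    by (rule linearI) auto
  then show ?thesis by (simp add: linear_conv_bounded_linear)
qed

lemma sig0_fst: "\<forall>y\<in>U. fst (sig0 y) = y" by (simp add: sig0_def)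
lemma sig0_fs: "\<forall>y\<in>U. fst (snd (sig0 y)) = mat 1" by (simp add: sig0_def)

lemma v_fst: "x \<in> U \<Longrightarrow> fst (frechet_derivative sig0 (at x) w) = w"
  using fst_D[OF cinf_sig0 sig0_fst] by blast
lemma v_fs: "x \<in> U \<Longrightarrow> fst (snd (frechet_derivative sig0 (at x) w)) = 0"
  using fst_snd_D[OF cinf_sig0 sig0_fs] by blast

lemma v_ss:
  assumes "x \<in> U"
  shows "snd (snd (frechet_derivative sig0 (at x) (axis k 1))) $ i $ j $ l = - pder (axis k 1) (PiG \<Gamma> i j l) x"
proof -
  obtain F where F: "(PiG \<Gamma> i j l has_derivative F) (at x)"
    using diff_PiG[OF assms, of i j l] unfolding differentiable_def by blast
  have "(\<lambda>q. snd (snd q) $ i $ j $ l) (frechet_derivative sig0 (at x) (axis k 1)) = (\<lambda>h. - F h) (axis k 1)"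
    by (rule deriv_comp_eq[OF opn assms diff_of_cinf[OF cinf_sig0 assms] lin_ss])
       (auto simp: sig0_def intro!: has_derivative_minus F)
  then show ?thesis using pder_deriv[OF F] by simp
qed

lemma om_v:
  assumes "x \<in> U"
  shows "\<omega> (sig0 x) (frechet_derivative sig0 (at x) (axis k 1)) =
     (axis k 1, \<chi> i j. PiG \<Gamma> i j k x, \<chi> j. Pi_low \<omega> sig0 j k x)"
proof -
  have a: "fst (\<omega> (sig0 x) (frechet_derivative sig0 (at x) (axis k 1))) = axis k 1"
    using sig0_gen(2)[OF assms] by blast
  have b: "fst (snd (\<omega> (sig0 x) (frechet_derivative sig0 (at x) (axis k 1)))) = (\<chi> i j. PiG \<Gamma> i j k x)"
    using sig0_Pi_up[OF assms] unfolding Pi_up_def by (simp add: vec_eq_iff)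
  have c: "snd (snd (\<omega> (sig0 x) (frechet_derivative sig0 (at x) (axis k 1)))) = (\<chi> j. Pi_low \<omega> sig0 j k x)"
    unfolding Pi_low_def by (simp add: vec_eq_iff)
  show ?thesis using a b c by (metis prod.collapse)
qed

lemma pth:
  assumes "x \<in> U"
  shows "pder (frechet_derivative sig0 (at x) (axis k 1)) (\<lambda>q. theta2 q (frechet_derivative sig0 (at x) (axis l 1))) (sig0 x)
     = (\<chi> i j. pder (axis k 1) (PiG \<Gamma> i j l) x)"
proof -
  define vk where "vk = frechet_derivative sig0 (at x) (axis k 1)"
  define vl where "vl = frechet_derivative sig0 (at x) (axis l 1)"
  define c where "c = (\<chi> i j. PiG \<Gamma> i j l x)"
  define d where "d = (\<chi> i j. pder (axis k 1) (PiG \<Gamma> i j l) x)"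
  have e: "theta2 (sig0 x + t *\<^sub>R vk) vl = c + t *\<^sub>R d" for t
  proof -
    have fs0: "fst (snd vk) = 0" using v_fs[OF assms] by (simp add: vk_def)
    have pt: "sig0 x + t *\<^sub>R vk = (x + t *\<^sub>R fst vk, mat 1, snd (snd (sig0 x)) + t *\<^sub>R snd (snd vk))"
      using fs0 by (simp add: sig0_def prod_eq_iff)
    have fvl: "fst vl = axis l 1" "fst (snd vl) = 0" using v_fst[OF assms] v_fs[OF assms] by (auto simp: vl_def)
    have vss: "snd (snd vk) $ i $ j $ b = - pder (axis k 1) (PiG \<Gamma> i j b) x" for i j b
      using v_ss[OF assms] by (simp add: vk_def)
    have ss: "(snd (snd (sig0 x)) + t *\<^sub>R snd (snd vk)) $ i $ j $ b = - PiG \<Gamma> i j b x - t * pder (axis k 1) (PiG \<Gamma> i j b) x" for i j b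
      by (simp add: sig0_def vss)
    define M where "M = snd (snd (sig0 x)) + t *\<^sub>R snd (snd vk)"
    have th: "theta2 (x + t *\<^sub>R fst vk, mat 1, M) vl = (\<chi> i j. - (M $ i $ j $ l))"
      by (simp add: theta2_eq fvl matrix_inv_1 mat1_nth vec_eq_iff mult.assoc kd_sum_nested axis_kd)
    have ssM: "M $ i $ j $ b = - PiG \<Gamma> i j b x - t * pder (axis k 1) (PiG \<Gamma> i j b) x" for i j b
      unfolding M_def by (rule ss)
    show ?thesis
      unfolding pt M_def[symmetric] th
      by (simp add: c_def d_def vec_eq_iff ssM)
  qed
  have "((\<lambda>t. theta2 (sig0 x + t *\<^sub>R vk) vl) has_vector_derivative d) (at 0)"
    unfolding e by (auto intro!: derivative_eq_intros)
  then have "pder vk (\<lambda>q. theta2 q vl) (sig0 x) = d"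
    unfolding pder_def by (rule vector_derivative_at)
  then show ?thesis by (simp add: vk_def vl_def d_def)
qed

end



context npc
begin

lemma PL_rel:
  assumes x: "x \<in> U"
  shows "PiT \<Gamma> j l x + real CARD('a) * Pi_low \<omega> sig0 j l x - Pi_low \<omega> sig0 l j x = 0"
proof -
  define v where "v k = frechet_derivative sig0 (at x) (axis k 1)" for k
  define p where "p = sig0 x"
  define PL where "PL j k = Pi_low \<omega> sig0 j k x" for j k
  define G where "G i j k = PiG \<Gamma> i j k x" for i j k
  define pd where "pd k i j l = pder (axis k 1) (PiG \<Gamma> i j l) x" for k i j l
  have pP: "p \<in> PP" using sig0_in[OF x] by (simp add: p_def)
  obtain K :: "'a \<Rightarrow> 'a \<Rightarrow> 'a \<Rightarrow> 'a \<Rightarrow> real" where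
    Kc: "\<forall>v\<in>tspace PP p. \<forall>w\<in>tspace PP p. \<forall>i j.
               curv \<omega> p v w $ i $ j
                 = (\<Sum>k\<in>UNIV. \<Sum>l\<in>UNIV. K i j k l * (fst (\<omega> p v))$k * (fst (\<omega> p w))$l)"
    and Kt: "\<forall>j l. (\<Sum>i\<in>UNIV. K i j i l) = 0"
    using npc pP unfolding normal_proj_conn_def Let_def by blast
  have vts: "v k \<in> tspace PP p" for k using sig0_gen(1)[OF x] by (simp add: v_def p_def)
  have om: "\<omega> p (v k) = (axis k 1, \<chi> i j. G i j k, \<chi> j. PL j k)" for k
    using om_v[OF x] by (simp add: v_def p_def G_def PL_def)
  have Kv: "curv \<omega> p (v k) (v l) $ i $ j = K i j k l" for i j k l
    using Kc vts om by (simp add: axis_kd)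
  have dth: "dtheta2 p (v k) (v l) $ i $ j = pd k i j l - pd l i j k" for i j k l
    using pth[OF x] by (simp add: dtheta2_def v_def p_def pd_def)
  have cexp: "curv \<omega> p (v i) (v l) $ i $ j = (pd i i j l - pd l i j i)
       + (\<Sum>m\<in>UNIV. G i m i * G m j l) - (\<Sum>m\<in>UNIV. G i m l * G m j i)
       + (PL j l - kd i l * PL j i) - (PL l i - PL i l) * kd i j" for i
    using curv_expand[where \<omega>=\<omega> and p=p and v="v i" and w="v l", OF om[of i] om[of l], of i j] dth[where i=i and j=j and k=i and l=l] by (simp add: axis_kd)
  have "0 = (\<Sum>i\<in>UNIV. K i j i l)" using Kt by simp
  also have "\<dots> = (\<Sum>i\<in>UNIV. curv \<omega> p (v i) (v l) $ i $ j)" using Kv by simp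
  also have "\<dots> = (\<Sum>i\<in>UNIV. pd i i j l) - (\<Sum>i\<in>UNIV. pd l i j i)
       + (\<Sum>i\<in>UNIV. \<Sum>m\<in>UNIV. G i m i * G m j l) - (\<Sum>i\<in>UNIV. \<Sum>m\<in>UNIV. G i m l * G m j i)
       + (\<Sum>i\<in>UNIV. PL j l - kd i l * PL j i) - (\<Sum>i\<in>UNIV. (PL l i - PL i l) * kd i j)"
    unfolding cexp by (simp add: sum.distrib sum_subtractf)
  finally have main: "0 = (\<Sum>i\<in>UNIV. pd i i j l) - (\<Sum>i\<in>UNIV. pd l i j i)
       + (\<Sum>i\<in>UNIV. \<Sum>m\<in>UNIV. G i m i * G m j l) - (\<Sum>i\<in>UNIV. \<Sum>m\<in>UNIV. G i m l * G m j i)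
       + (\<Sum>i\<in>UNIV. PL j l - kd i l * PL j i) - (\<Sum>i\<in>UNIV. (PL l i - PL i l) * kd i j)" .
  have s1: "(\<Sum>i\<in>UNIV. pd l i j i) = - pder (axis l 1) (mu \<Gamma> j) x"
  proof -
    have "(\<Sum>i\<in>UNIV. pd l i j i) = pder (axis l 1) (\<lambda>y. \<Sum>i\<in>UNIV. PiG \<Gamma> i j i y) x"
      unfolding pd_def by (rule pder_sum[symmetric]) (auto intro: diff_PiG[OF x])
    also have "(\<lambda>y. \<Sum>i\<in>UNIV. PiG \<Gamma> i j i y) = (\<lambda>y. - mu \<Gamma> j y)"
      by (rule ext) (rule tr2)
    also have "pder (axis l 1) (\<lambda>y. - mu \<Gamma> j y) x = - pder (axis l 1) (mu \<Gamma> j) x"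
      by (rule pder_neg[OF diff_mu[OF x]])
    finally show ?thesis .
  qed
  have s2: "(\<Sum>i\<in>UNIV. \<Sum>m\<in>UNIV. G i m i * G m j l) = - (\<Sum>m\<in>UNIV. mu \<Gamma> m x * G m j l)"
  proof -
    have "(\<Sum>i\<in>UNIV. \<Sum>m\<in>UNIV. G i m i * G m j l) = (\<Sum>m\<in>UNIV. (\<Sum>i\<in>UNIV. G i m i) * G m j l)"
      by (subst sum.swap) (simp add: sum_distrib_right)
    also have "\<dots> = (\<Sum>m\<in>UNIV. (- mu \<Gamma> m x) * G m j l)"
      unfolding G_def by (simp add: tr2)
    finally show ?thesis by (simp add: sum_negf)
  qed
  have s3: "(\<Sum>i\<in>UNIV. \<Sum>m\<in>UNIV. G i m l * G m j i) = (\<Sum>\<alpha>\<in>UNIV. \<Sum>\<beta>\<in>UNIV. G \<alpha> j \<beta> * G \<beta> \<alpha> l)"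
    by (subst sum.swap) (simp add: mult.commute)
  have s4: "(\<Sum>i\<in>UNIV. PL j l - kd i l * PL j i) = real CARD('a) * PL j l - PL j l"
    by (simp add: sum_subtractf)
  have s5: "(\<Sum>i\<in>UNIV. (PL l i - PL i l) * kd i j) = PL l j - PL j l"
    by (simp add: left_diff_distrib sum_subtractf)
  have T: "PiT \<Gamma> j l x = (\<Sum>i\<in>UNIV. pd i i j l) + pder (axis l 1) (mu \<Gamma> j) x
      - (\<Sum>m\<in>UNIV. mu \<Gamma> m x * G m j l) - (\<Sum>\<alpha>\<in>UNIV. \<Sum>\<beta>\<in>UNIV. G \<alpha> j \<beta> * G \<beta> \<alpha> l)"
    by (simp add: PiT_def pd_def G_def)
  show ?thesis using main unfolding s1 s2 s3 s4 s5 T PL_def[symmetric] by simp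
qed

end



context npc
begin

lemma valid_PiL:
  assumes "CARD('a) \<ge> 2" "is_section \<Gamma> U \<sigma>" "pb_cond1 \<omega> U \<sigma>"
    "\<forall>x\<in>U. \<forall>k. (\<Sum>i\<in>UNIV. Pi_up \<omega> \<sigma> i i k x) = mu \<Gamma> k x" "x \<in> U"
  shows "Pi_low \<omega> \<sigma> j k x = PiL \<Gamma> j k x"
proof -
  have eq: "\<And>y. y \<in> U \<Longrightarrow> sig0 y = \<sigma> y"
    using valid_eq1[OF assms(2,3)] assms(4) by metis
  have "(\<sigma> has_derivative frechet_derivative sig0 (at x)) (at x)"
    by (rule has_derivative_transform_within_open[OF _ opn assms(5) eq])
       (use diff_of_cinf[OF cinf_sig0 assms(5)] in \<open>simp add: frechet_derivative_works[symmetric]\<close>)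
  then have D: "frechet_derivative \<sigma> (at x) = frechet_derivative sig0 (at x)"
    by (simp add: frechet_derivative_at[symmetric])
  have PL: "Pi_low \<omega> \<sigma> j k x = Pi_low \<omega> sig0 j k x" for j k
    unfolding Pi_low_def D eq[OF assms(5), symmetric] ..
  have N: "(real CARD('a))\<^sup>2 \<noteq> 1"
  proof -
    have "real CARD('a) \<ge> 2" using assms(1) by simp
    then have "real CARD('a) * real CARD('a) \<ge> 2 * 2" by (intro mult_mono) auto
    then have "(real CARD('a))\<^sup>2 \<ge> 4" by (simp add: power2_eq_square)
    then show ?thesis by linarith
  qed
  have "Pi_low \<omega> sig0 j k x = (-1 / ((real CARD('a))\<^sup>2 - 1)) * (real CARD('a) * PiT \<Gamma> j k x + PiT \<Gamma> k j x)"
    by (rule solve2[where T="\<lambda>j l. PiT \<Gamma> j l x" and P="\<lambda>j l. Pi_low \<omega> sig0 j l x", OF N PL_rel[OF assms(5)]])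
  then show ?thesis by (simp add: PL PiL_def)
qed

end

theorem mainTheorem5:
  fixes U :: "(real^'n) set"
    and \<Gamma> :: "'n \<Rightarrow> 'n \<Rightarrow> 'n \<Rightarrow> real^'n \<Rightarrow> real"
    and \<omega> :: "'n frame \<Rightarrow> 'n frame \<Rightarrow> 'n galg"
  assumes "CARD('n) \<ge> 2"
    and "open U"
    and "\<forall>i j k. cinf_on (\<Gamma> i j k) U"
    and "normal_proj_conn \<Gamma> U \<omega>"
  shows
    "(\<exists>\<sigma>. is_section \<Gamma> U \<sigma> \<and> pb_cond1 \<omega> U \<sigma>
          \<and> (\<forall>x\<in>U. \<forall>k. (\<Sum>i\<in>UNIV. Pi_up \<omega> \<sigma> i i k x) = mu \<Gamma> k x))
   \<and> (\<forall>\<sigma> \<sigma>'. is_section \<Gamma> U \<sigma> \<and> pb_cond1 \<omega> U \<sigma>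
          \<and> (\<forall>x\<in>U. \<forall>k. (\<Sum>i\<in>UNIV. Pi_up \<omega> \<sigma> i i k x) = mu \<Gamma> k x)
        \<and> is_section \<Gamma> U \<sigma>' \<and> pb_cond1 \<omega> U \<sigma>'
          \<and> (\<forall>x\<in>U. \<forall>k. (\<Sum>i\<in>UNIV. Pi_up \<omega> \<sigma>' i i k x) = mu \<Gamma> k x)
        \<longrightarrow> (\<forall>x\<in>U. \<sigma> x = \<sigma>' x))
   \<and> (\<forall>\<sigma> \<sigma>'. is_section \<Gamma> U \<sigma> \<and> pb_cond1 \<omega> U \<sigma>
          \<and> (\<forall>x\<in>U. \<forall>j. (\<Sum>i\<in>UNIV. Pi_up \<omega> \<sigma> i j i x) = - mu \<Gamma> j x)
        \<and> is_section \<Gamma> U \<sigma>' \<and> pb_cond1 \<omega> U \<sigma>'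
          \<and> (\<forall>x\<in>U. \<forall>j. (\<Sum>i\<in>UNIV. Pi_up \<omega> \<sigma>' i j i x) = - mu \<Gamma> j x)
        \<longrightarrow> (\<forall>x\<in>U. \<sigma> x = \<sigma>' x))
   \<and> (\<forall>\<sigma>. is_section \<Gamma> U \<sigma> \<and> pb_cond1 \<omega> U \<sigma>
          \<and> (\<forall>x\<in>U. \<forall>k. (\<Sum>i\<in>UNIV. Pi_up \<omega> \<sigma> i i k x) = mu \<Gamma> k x)
        \<longrightarrow> (\<forall>x\<in>U. \<forall>j. (\<Sum>i\<in>UNIV. Pi_up \<omega> \<sigma> i j i x) = - mu \<Gamma> j x)
          \<and> (\<forall>x\<in>U. \<forall>i j k. Pi_up \<omega> \<sigma> i j k x = PiG \<Gamma> i j k x)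
          \<and> (\<forall>x\<in>U. \<forall>j k. Pi_low \<omega> \<sigma> j k x = PiL \<Gamma> j k x))"
proof -
  interpret npc \<Gamma> U \<omega>
    by unfold_locales (use assms in auto)
  have P1: "\<exists>\<sigma>. is_section \<Gamma> U \<sigma> \<and> pb_cond1 \<omega> U \<sigma>
          \<and> (\<forall>x\<in>U. \<forall>k. (\<Sum>i\<in>UNIV. Pi_up \<omega> \<sigma> i i k x) = mu \<Gamma> k x)"
    using sig0_section sig0_pb by (intro exI[of _ sig0]) (simp add: sig0_Pi_up tr1)
  have P2: "\<forall>\<sigma> \<sigma>'. is_section \<Gamma> U \<sigma> \<and> pb_cond1 \<omega> U \<sigma>
          \<and> (\<forall>x\<in>U. \<forall>k. (\<Sum>i\<in>UNIV. Pi_up \<omega> \<sigma> i i k x) = mu \<Gamma> k x)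
        \<and> is_section \<Gamma> U \<sigma>' \<and> pb_cond1 \<omega> U \<sigma>'
          \<and> (\<forall>x\<in>U. \<forall>k. (\<Sum>i\<in>UNIV. Pi_up \<omega> \<sigma>' i i k x) = mu \<Gamma> k x)
        \<longrightarrow> (\<forall>x\<in>U. \<sigma> x = \<sigma>' x)"
    using valid_eq1 by metis
  have P3: "\<forall>\<sigma> \<sigma>'. is_section \<Gamma> U \<sigma> \<and> pb_cond1 \<omega> U \<sigma>
          \<and> (\<forall>x\<in>U. \<forall>j. (\<Sum>i\<in>UNIV. Pi_up \<omega> \<sigma> i j i x) = - mu \<Gamma> j x)
        \<and> is_section \<Gamma> U \<sigma>' \<and> pb_cond1 \<omega> U \<sigma>'
          \<and> (\<forall>x\<in>U. \<forall>j. (\<Sum>i\<in>UNIV. Pi_up \<omega> \<sigma>' i j i x) = - mu \<Gamma> j x)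
        \<longrightarrow> (\<forall>x\<in>U. \<sigma> x = \<sigma>' x)"
    using valid_eq2 by metis
  have P4: "\<forall>\<sigma>. is_section \<Gamma> U \<sigma> \<and> pb_cond1 \<omega> U \<sigma>
          \<and> (\<forall>x\<in>U. \<forall>k. (\<Sum>i\<in>UNIV. Pi_up \<omega> \<sigma> i i k x) = mu \<Gamma> k x)
        \<longrightarrow> (\<forall>x\<in>U. \<forall>j. (\<Sum>i\<in>UNIV. Pi_up \<omega> \<sigma> i j i x) = - mu \<Gamma> j x)
          \<and> (\<forall>x\<in>U. \<forall>i j k. Pi_up \<omega> \<sigma> i j k x = PiG \<Gamma> i j k x)
          \<and> (\<forall>x\<in>U. \<forall>j k. Pi_low \<omega> \<sigma> j k x = PiL \<Gamma> j k x)"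
  proof (intro allI impI)
    fix \<sigma> assume h: "is_section \<Gamma> U \<sigma> \<and> pb_cond1 \<omega> U \<sigma>
          \<and> (\<forall>x\<in>U. \<forall>k. (\<Sum>i\<in>UNIV. Pi_up \<omega> \<sigma> i i k x) = mu \<Gamma> k x)"
    have G: "\<forall>x\<in>U. \<forall>i j k. Pi_up \<omega> \<sigma> i j k x = PiG \<Gamma> i j k x"
      using valid_PiG h by blast
    moreover have "\<forall>x\<in>U. \<forall>j. (\<Sum>i\<in>UNIV. Pi_up \<omega> \<sigma> i j i x) = - mu \<Gamma> j x"
      using G by (simp add: tr2)
    moreover have "\<forall>x\<in>U. \<forall>j k. Pi_low \<omega> \<sigma> j k x = PiL \<Gamma> j k x"
      using valid_PiL[OF assms(1)] h by blast
    ultimately show "(\<forall>x\<in>U. \<forall>j. (\<Sum>i\<in>UNIV. Pi_up \<omega> \<sigma> i j i x) = - mu \<Gamma> j x)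
          \<and> (\<forall>x\<in>U. \<forall>i j k. Pi_up \<omega> \<sigma> i j k x = PiG \<Gamma> i j k x)
          \<and> (\<forall>x\<in>U. \<forall>j k. Pi_low \<omega> \<sigma> j k x = PiL \<Gamma> j k x)" by blast
  qed
  show ?thesis using P1 P2 P3 P4 by blast
qed


end
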